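(* Let $\alpha>0$ be fixed and let $\mathscr{N}$ be a feasible functional on a finite dimensional Hilbert space $\mathcal{H}$. Consider the augmented dual ascent scheme $$x^{n+1} = \operatorname{arg\,min}_{x} \mathscr{N}^{**}(x)+\langle x,\Lambda^n\rangle +\frac{\alpha}{2}\|x\|^2,\qquad \Lambda^{n+1} = \Lambda^{n} + \alpha\mathcal{P}_{\mathcal{M}^\perp}(x^{n+1}),\qquad \Lambda^0=0.$$ Suppose that $\mathscr{N}$ is finite-valued, or that $(\Lambda^{n})_{n=1}^\infty$ is a bounded sequence. Then $(x^{n})_{n=1}^\infty$ and $(\Lambda^{n})_{n=1}^\infty$ converge to some limits $x^\star$ and $\Lambda^\star$, where $x^\star$ is the solution to $\operatorname{arg\,min}_{x\in\mathcal{M}}\mathscr{N}^{**}(x)+\frac{\alpha}{2}\|x\|^2$.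
   Context: $\mathcal{M}\subset\mathcal{H}$ is a linear subspace, $\mathcal{P}_{\mathcal{M}^\perp}$ the orthogonal projection onto $\mathcal{M}^\perp$, $\mathscr{N}^{**}$ the double Fenchel conjugate (l.s.c. convex envelope) of $\mathscr{N}$. A functional $\mathscr{N}:\mathcal{H}\to(-\infty,\infty]$ is called feasible if it is lower semi-continuous, proper, bounded below, and satisfies $\lim_{\|x\|\rightarrow\infty}\mathscr{N}(x)/\|x\|=\infty$. *)

theory Defs
  imports "HOL-Analysis.Analysis"
begin

definition lsc :: "('a::topological_space \<Rightarrow> ereal) \<Rightarrow> bool" where
  "lsc f \<longleftrightarrow> (\<forall>c::ereal. closed {x. f x \<le> c})"

definition feasible :: "('a::real_normed_vector \<Rightarrow> ereal) \<Rightarrow> bool" where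
  "feasible N \<longleftrightarrow>
     lsc N \<and>
     (\<forall>x. N x \<noteq> -\<infinity>) \<and> (\<exists>x. N x \<noteq> \<infinity>) \<and>
     (\<exists>c::real. \<forall>x. ereal c \<le> N x) \<and>
     ((\<lambda>x. N x / ereal (norm x)) \<longlongrightarrow> \<infinity>) at_infinity"

definition fconj :: "('a::real_inner \<Rightarrow> ereal) \<Rightarrow> 'a \<Rightarrow> ereal" where
  "fconj f y = (SUP x. ereal (x \<bullet> y) - f x)"

definition proj_perp :: "'a::real_inner set \<Rightarrow> 'a \<Rightarrow> 'a" where
  "proj_perp M x = (THE y. y \<in> orthogonal_comp M \<and> x - y \<in> M)"

end

theory Submission
  imports Defs
begin


lemma fconj_ge: "ereal (x \<bullet> y) - f x \<le> fconj f y"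
  unfolding fconj_def by (rule SUP_upper) auto

lemma proj_perp:
  fixes M :: "'a::euclidean_space set"
  assumes "subspace M"
  shows "proj_perp M x \<in> orthogonal_comp M \<and> x - proj_perp M x \<in> M"
proof -
  have "x \<in> M + orthogonal_comp M" using subspace_sum_orthogonal_comp[OF assms] by auto
  then obtain m p where mp: "m \<in> M" "p \<in> orthogonal_comp M" "x = m + p"
    by (meson set_plus_elim)
  have ex: "p \<in> orthogonal_comp M \<and> x - p \<in> M" using mp by simp
  have un: "y = p" if "y \<in> orthogonal_comp M \<and> x - y \<in> M" for y
  proof -
    have "p - y \<in> orthogonal_comp M"
      using that mp subspace_diff[OF subspace_orthogonal_comp] by blast
    moreover have "p - y \<in> M" using that mp subspace_diff[OF assms, of "x - y" m] by (simp add: algebra_simps)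
    ultimately have "p - y \<in> M \<inter> orthogonal_comp M" by blast
    then show ?thesis using orthogonal_Int_0[OF assms] by auto
  qed
  show ?thesis unfolding proj_perp_def
    by (rule theI[of _ p]) (use ex un in blast)+
qed

lemma G_lb:
  assumes "\<And>x. ereal c \<le> f x"
  shows "ereal c \<le> fconj (fconj f) w"
proof -
  have "fconj f 0 \<le> ereal (- c)"
    unfolding fconj_def
  proof (rule SUP_least)
    fix x
    show "ereal (x \<bullet> 0) - f x \<le> ereal (- c)"
      using assms[of x] by (cases "f x") auto
  qed
  moreover have "ereal (0 \<bullet> w) - fconj f 0 \<le> fconj (fconj f) w" by (rule fconj_ge)
  ultimately show ?thesis
  proof (cases "fconj f 0")
    case (real r)
    assume a: "fconj f 0 \<le> ereal (- c)" "ereal (0 \<bullet> w) - fconj f 0 \<le> fconj (fconj f) w"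
    then have "ereal c \<le> ereal (- r)" using real by simp
    also have "\<dots> \<le> fconj (fconj f) w" using a real by simp
    finally show ?thesis .
  qed auto
qed

lemma G_ub: "fconj (fconj f) w \<le> f w"
  unfolding fconj_def[of "fconj f"]
proof (rule SUP_least)
  fix y
  have h: "ereal (w \<bullet> y) - f w \<le> fconj f y" by (rule fconj_ge)
  show "ereal (y \<bullet> w) - fconj f y \<le> f w"
    using h by (cases "f w"; cases "fconj f y") (auto simp: inner_commute)
qed

lemma G_conv:
  assumes "fconj (fconj f) x = ereal a" "fconj (fconj f) y = ereal b" "0 \<le> t" "t \<le> 1"
  shows "fconj (fconj f) ((1 - t) *\<^sub>R x + t *\<^sub>R y) \<le> ereal ((1-t) * a + t * b)"
  unfolding fconj_def[of "fconj f"]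
proof (rule SUP_least)
  fix v
  have hx: "ereal (v \<bullet> x) - fconj f v \<le> ereal a" using fconj_ge[of v x "fconj f"] assms(1) by (simp add: inner_commute)
  have hy: "ereal (v \<bullet> y) - fconj f v \<le> ereal b" using fconj_ge[of v y "fconj f"] assms(2) by (simp add: inner_commute)
  show "ereal (v \<bullet> ((1 - t) *\<^sub>R x + t *\<^sub>R y)) - fconj f v \<le> ereal ((1 - t) * a + t * b)"
  proof (cases "fconj f v")
    case (real s)
    have "v \<bullet> x - s \<le> a" "v \<bullet> y - s \<le> b" using hx hy real by auto
    then have "(1-t) * (v \<bullet> x - s) + t * (v \<bullet> y - s) \<le> (1-t) * a + t * b"
      using assms(3,4) by (meson add_mono mult_left_mono diff_ge_0_iff_ge)
    then show ?thesis using real by (simp add: inner_add_right algebra_simps)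
  qed (use hx in auto)
qed

lemma G_lsc:
  assumes "w \<longlonglongrightarrow> w0" "b \<longlonglongrightarrow> b0" "\<And>k. fconj (fconj f) (w k) \<le> ereal (b k)"
  shows "fconj (fconj f) w0 \<le> ereal b0"
  unfolding fconj_def[of "fconj f"]
proof (rule SUP_least)
  fix v
  have h: "\<And>k. ereal (v \<bullet> w k) - fconj f v \<le> ereal (b k)"
    using fconj_ge[of v "w _" "fconj f"] assms(3) by (metis inner_commute order_trans)
  show "ereal (v \<bullet> w0) - fconj f v \<le> ereal b0"
  proof (cases "fconj f v")
    case (real s)
    have "\<And>k. v \<bullet> w k - s \<le> b k" using h real by auto
    moreover have "(\<lambda>k. v \<bullet> w k - s) \<longlonglongrightarrow> v \<bullet> w0 - s"
      by (intro tendsto_intros assms(1))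
    ultimately have "v \<bullet> w0 - s \<le> b0"
      using LIMSEQ_le[OF _ assms(2)] by blast
    then show ?thesis using real by simp
  qed (use h[of 0] in auto)
qed


lemma norm_comb:
  fixes x y :: "'a::real_inner"
  shows "(norm ((1 - t) *\<^sub>R x + t *\<^sub>R y))\<^sup>2 = (1-t) * (norm x)\<^sup>2 + t * (norm y)\<^sup>2 - t * (1 - t) * (norm (y - x))\<^sup>2"
  by (simp add: power2_norm_eq_inner inner_simps inner_commute algebra_simps)

lemma lim_aux:
  fixes A B K :: real
  assumes "\<And>t. 0 < t \<Longrightarrow> t \<le> 1 \<Longrightarrow> A \<le> B - (1 - t) * K" "K \<ge> 0"
  shows "A \<le> B - K"
proof (rule ccontr)
  assume c: "\<not> A \<le> B - K"
  have AB: "A \<le> B" using assms(1)[of 1] by simp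
  then have K: "K > 0" using c by simp
  define t where "t = (A + K - B) / (2 * K)"
  have t0: "0 < t" using c K by (simp add: t_def)
  have t1: "t \<le> 1" using AB K by (simp add: t_def field_simps)
  have "t * K = (A + K - B) / 2" using K by (simp add: t_def field_simps)
  then have "A > B - (1 - t) * K" using c by (simp add: algebra_simps)
  then show False using assms(1)[OF t0 t1] by simp
qed

lemma strong_conv:
  fixes g :: "'a::real_inner \<Rightarrow> ereal"
  assumes conv: "\<And>x y a b t. g x = ereal a \<Longrightarrow> g y = ereal b \<Longrightarrow> 0 \<le> t \<Longrightarrow> t \<le> 1 \<Longrightarrow>
              g ((1 - t) *\<^sub>R x + t *\<^sub>R y) \<le> ereal ((1-t) * a + t * b)"
    and al: "\<alpha> > 0"
    and mn: "\<And>y. g x + ereal (x \<bullet> L) + ereal (\<alpha> / 2 * (norm x)\<^sup>2) \<le> g y + ereal (y \<bullet> L) + ereal (\<alpha> / 2 * (norm y)\<^sup>2)"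
    and ga: "g x = ereal a" and gb: "g y = ereal b"
  shows "a + x \<bullet> L + \<alpha> / 2 * (norm x)\<^sup>2 + \<alpha> / 2 * (norm (y - x))\<^sup>2 \<le> b + y \<bullet> L + \<alpha> / 2 * (norm y)\<^sup>2"
proof -
  define A where "A = a + x \<bullet> L + \<alpha> / 2 * (norm x)\<^sup>2"
  define B where "B = b + y \<bullet> L + \<alpha> / 2 * (norm y)\<^sup>2"
  define K where "K = \<alpha> / 2 * (norm (y - x))\<^sup>2"
  have "A \<le> B - K"
  proof (rule lim_aux)
    show "K \<ge> 0" using al by (simp add: K_def)
    fix t :: real assume t: "0 < t" "t \<le> 1"
    define z where "z = (1 - t) *\<^sub>R x + t *\<^sub>R y"
    have gz: "g z \<le> ereal ((1-t) * a + t * b)" unfolding z_def using conv[OF ga gb] t by simp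
    have "ereal A \<le> g z + ereal (z \<bullet> L) + ereal (\<alpha> / 2 * (norm z)\<^sup>2)"
      using mn[of z] ga by (simp add: A_def)
    also have "\<dots> \<le> ereal ((1-t) * a + t * b) + ereal (z \<bullet> L) + ereal (\<alpha> / 2 * (norm z)\<^sup>2)"
      using gz by (intro add_right_mono) 
    finally have h: "A \<le> (1-t) * a + t * b + z \<bullet> L + \<alpha> / 2 * (norm z)\<^sup>2" by simp
    have "(1-t) * a + t * b + z \<bullet> L + \<alpha> / 2 * (norm z)\<^sup>2 = (1 - t) * A + t * B - t * (1 - t) * K"
      unfolding z_def norm_comb A_def B_def K_def by (simp add: inner_simps algebra_simps) (simp add: field_simps)
    with h have "t * A \<le> t * (B - (1 - t) * K)" by (simp add: algebra_simps)
    then show "A \<le> B - (1 - t) * K" using t by simp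
  qed
  then show ?thesis by (simp add: A_def B_def K_def)
qed


lemma perp0: "m \<in> M \<Longrightarrow> p \<in> orthogonal_comp M \<Longrightarrow> m \<bullet> p = 0"
  by (simp add: orthogonal_comp_def orthogonal_def)

lemma pyth: "m \<in> M \<Longrightarrow> p \<in> orthogonal_comp M \<Longrightarrow> (norm p)\<^sup>2 \<le> (norm (m + p))\<^sup>2"
  using perp0[of m M p]
  by (simp add: power2_norm_eq_inner inner_simps inner_commute)

locale das =
  fixes g :: "'a::euclidean_space \<Rightarrow> ereal" and c :: real and M :: "'a set" and \<alpha> :: real
    and x \<Lambda> :: "nat \<Rightarrow> 'a" and z0 :: 'a
  assumes lb: "\<And>w. ereal c \<le> g w"
  and conv: "\<And>x y a b t. g x = ereal a \<Longrightarrow> g y = ereal b \<Longrightarrow> 0 \<le> t \<Longrightarrow> t \<le> 1 \<Longrightarrow>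
              g ((1 - t) *\<^sub>R x + t *\<^sub>R y) \<le> ereal ((1-t) * a + t * b)"
  and lsc: "\<And>w w0 b b0. w \<longlonglongrightarrow> w0 \<Longrightarrow> b \<longlonglongrightarrow> b0 \<Longrightarrow> (\<And>k. g (w k) \<le> ereal (b k)) \<Longrightarrow> g w0 \<le> ereal b0"
  and al: "\<alpha> > 0" and sub: "subspace M" and L0: "\<Lambda> 0 = 0"
  and opt: "\<And>n y. g (x (Suc n)) + ereal (x (Suc n) \<bullet> \<Lambda> n) + ereal (\<alpha> / 2 * (norm (x (Suc n)))\<^sup>2)
               \<le> g y + ereal (y \<bullet> \<Lambda> n) + ereal (\<alpha> / 2 * (norm y)\<^sup>2)"
  and upd: "\<And>n. \<Lambda> (Suc n) = \<Lambda> n + \<alpha> *\<^sub>R proj_perp M (x (Suc n))"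
  and fin: "g z0 \<noteq> \<infinity>"
begin

lemma gx_fin: "g (x (Suc n)) \<noteq> \<infinity>"
proof
  assume h: "g (x (Suc n)) = \<infinity>"
  have "g z0 \<noteq> -\<infinity>" using lb[of z0] by auto
  then obtain r where "g z0 = ereal r" using fin by (cases "g z0") auto
  then show False using opt[of n z0] h by simp
qed

definition gx where "gx n = real_of_ereal (g (x (Suc n)))"

lemma gx: "g (x (Suc n)) = ereal (gx n)"
  using gx_fin[of n] lb[of "x (Suc n)"] unfolding gx_def by (cases "g (x (Suc n))") auto

definition P where "P n = proj_perp M (x n)"

lemma P: "P n \<in> orthogonal_comp M" "x n - P n \<in> M"
  using proj_perp[OF sub, of "x n"] by (auto simp: P_def)

lemma Lperp: "\<Lambda> n \<in> orthogonal_comp M"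
proof (induction n)
  case 0 then show ?case using L0 subspace_0[OF subspace_orthogonal_comp] by simp
next
  case (Suc n)
  then show ?case unfolding upd using P[of "Suc n"]
    by (simp add: P_def subspace_add subspace_scale subspace_orthogonal_comp)
qed

definition d where "d n = gx n + x (Suc n) \<bullet> \<Lambda> n + \<alpha> / 2 * (norm (x (Suc n)))\<^sup>2"

lemma SC: "g y = ereal b \<Longrightarrow> d n + \<alpha> / 2 * (norm (y - x (Suc n)))\<^sup>2 \<le> b + y \<bullet> \<Lambda> n + \<alpha> / 2 * (norm y)\<^sup>2"
  using strong_conv[OF conv al opt gx] unfolding d_def by blast

lemma d_mono: "d n + \<alpha> / 2 * (norm (P (Suc n)))\<^sup>2 \<le> d (Suc n)"
proof -
  define x1 where "x1 = x (Suc n)"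
  define x2 where "x2 = x (Suc (Suc n))"
  define p where "p = P (Suc n)"
  define p' where "p' = P (Suc (Suc n))"
  have pM: "p \<in> orthogonal_comp M" "p' \<in> orthogonal_comp M" "x1 - p \<in> M" "x2 - p' \<in> M"
    using P unfolding p_def p'_def x1_def x2_def by auto
  have s: "d n + \<alpha> / 2 * (norm (x2 - x1))\<^sup>2 \<le> gx (Suc n) + x2 \<bullet> \<Lambda> n + \<alpha> / 2 * (norm x2)\<^sup>2"
    using SC[OF gx[of "Suc n"], of n] unfolding x1_def x2_def .
  have dS: "d (Suc n) = gx (Suc n) + x2 \<bullet> \<Lambda> n + \<alpha> * (x2 \<bullet> p) + \<alpha> / 2 * (norm x2)\<^sup>2"
    unfolding d_def x2_def p_def P_def upd by (simp add: inner_simps)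
  have "x2 \<bullet> p = (x2 - p') \<bullet> p + p' \<bullet> p" by (simp add: inner_simps)
  then have x2p: "x2 \<bullet> p = p' \<bullet> p" using perp0[OF pM(4) pM(1)] by simp
  have "x2 - x1 = ((x2 - p') - (x1 - p)) + (p' - p)" by simp
  moreover have "(x2 - p') - (x1 - p) \<in> M" using pM sub by (simp add: subspace_diff)
  moreover have "p' - p \<in> orthogonal_comp M" using pM by (simp add: subspace_diff subspace_orthogonal_comp)
  ultimately have "(norm (p' - p))\<^sup>2 \<le> (norm (x2 - x1))\<^sup>2" using pyth by metis
  moreover have "(norm (p' - p))\<^sup>2 = (norm p')\<^sup>2 - 2 * (p' \<bullet> p) + (norm p)\<^sup>2"
    by (simp add: power2_norm_eq_inner inner_simps inner_commute)
  ultimately have "(norm p)\<^sup>2 \<le> (norm (x2 - x1))\<^sup>2 + 2 * (p' \<bullet> p)"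
    by (smt (verit) zero_le_power2)
  then have "\<alpha> / 2 * (norm p)\<^sup>2 \<le> \<alpha> / 2 * (norm (x2 - x1))\<^sup>2 + \<alpha> * (p' \<bullet> p)"
  proof -
    assume h: "(norm p)\<^sup>2 \<le> (norm (x2 - x1))\<^sup>2 + 2 * (p' \<bullet> p)"
    have "\<alpha> / 2 * (norm p)\<^sup>2 \<le> \<alpha> / 2 * ((norm (x2 - x1))\<^sup>2 + 2 * (p' \<bullet> p))"
      using al h by (intro mult_left_mono) auto
    then show ?thesis by (simp add: algebra_simps)
  qed
  moreover have "\<alpha> * (x2 \<bullet> p) = \<alpha> * (p' \<bullet> p)" using x2p by simp
  ultimately show ?thesis using s dS unfolding p_def by linarith
qed

end

lemma sq_to_zero:
  fixes f :: "nat \<Rightarrow> 'a::real_normed_vector"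
  assumes "(\<lambda>n. (norm (f n))\<^sup>2) \<longlonglongrightarrow> 0"
  shows "f \<longlonglongrightarrow> 0"
proof -
  have "(\<lambda>n. sqrt ((norm (f n))\<^sup>2)) \<longlonglongrightarrow> sqrt 0" by (intro tendsto_real_sqrt assms)
  then have "(\<lambda>n. norm (f n)) \<longlonglongrightarrow> 0" by simp
  then show ?thesis using tendsto_norm_zero_iff by blast
qed

lemma norm_add_scale_sq:
  fixes u p :: "'a::real_inner"
  shows "(norm (u + a *\<^sub>R p))\<^sup>2 = (norm u)\<^sup>2 + 2 * a * (p \<bullet> u) + a\<^sup>2 * (norm p)\<^sup>2"
  unfolding power2_norm_eq_inner by (simp add: inner_simps inner_commute algebra_simps power2_eq_square)

lemma le_max_sq: "0 \<le> (t::real) \<Longrightarrow> t \<le> max 1 (t\<^sup>2)"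
proof (cases "t \<le> 1")
  case False
  then have "t * 1 \<le> t * t" by (intro mult_left_mono) auto
  then show ?thesis by (simp add: power2_eq_square)
qed auto

context das begin

lemma bounded_case:
  assumes bL: "bounded (range \<Lambda>)"
  shows "\<exists>xs Ls. (\<lambda>n. x (Suc n)) \<longlonglongrightarrow> xs \<and> \<Lambda> \<longlonglongrightarrow> Ls \<and> xs \<in> M \<and>
     (\<forall>y\<in>M. g xs + ereal (\<alpha> / 2 * (norm xs)\<^sup>2) \<le> g y + ereal (\<alpha> / 2 * (norm y)\<^sup>2))"
proof -
  obtain Lb where Lb: "\<And>n. norm (\<Lambda> n) \<le> Lb" using bL unfolding bounded_iff by auto
  obtain zr where zr: "g z0 = ereal zr" using fin lb[of z0] by (cases "g z0") auto
  define U where "U = zr + norm z0 * Lb + \<alpha> / 2 * (norm z0)\<^sup>2"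
  have dU: "d n + \<alpha> / 2 * (norm (z0 - x (Suc n)))\<^sup>2 \<le> U" for n
  proof -
    have "z0 \<bullet> \<Lambda> n \<le> norm z0 * norm (\<Lambda> n)" by (rule norm_cauchy_schwarz)
    also have "\<dots> \<le> norm z0 * Lb" using Lb[of n] by (intro mult_left_mono) auto
    finally show ?thesis using SC[OF zr, of n] unfolding U_def by linarith
  qed
  have inc: "incseq d"
  proof (rule incseq_SucI)
    fix n
    have "0 \<le> \<alpha> / 2 * (norm (P (Suc n)))\<^sup>2" using al by simp
    then show "d n \<le> d (Suc n)" using d_mono[of n] by linarith
  qed
  have dU': "d n \<le> U" for n
  proof -
    have "0 \<le> \<alpha> / 2 * (norm (z0 - x (Suc n)))\<^sup>2" using al by simp
    then show ?thesis using dU[of n] by linarith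
  qed
  have "\<forall>i. d i \<le> U" using dU' by auto
  then obtain D where D: "d \<longlonglongrightarrow> D" using incseq_convergent[OF inc] by blast
  have P0: "(\<lambda>n. P (Suc n)) \<longlonglongrightarrow> 0"
  proof (rule sq_to_zero)
    have dd: "(\<lambda>n. 2 / \<alpha> * (d (Suc n) - d n)) \<longlonglongrightarrow> 2 / \<alpha> * (D - D)"
      by (intro tendsto_intros D LIMSEQ_Suc)
    show "(\<lambda>n. (norm (P (Suc n)))\<^sup>2) \<longlonglongrightarrow> 0"
    proof (rule tendsto_sandwich[of "\<lambda>_. 0" _ _ "\<lambda>n. 2 / \<alpha> * (d (Suc n) - d n)"])
      show "\<forall>\<^sub>F n in sequentially. 0 \<le> (norm (P (Suc n)))\<^sup>2" by simp
      show "\<forall>\<^sub>F n in sequentially. (norm (P (Suc n)))\<^sup>2 \<le> 2 / \<alpha> * (d (Suc n) - d n)"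
        using d_mono al by (auto simp: field_simps)
    qed (use dd in auto)
  qed
  define R where "R = (U - d 0) * 2 / \<alpha>"
  have xb: "norm (x (Suc n)) \<le> norm z0 + max 1 R" for n
  proof -
    have "\<alpha> / 2 * (norm (z0 - x (Suc n)))\<^sup>2 \<le> U - d 0"
      using dU[of n] inc[unfolded incseq_def, rule_format, of 0 n] by linarith
    then have "(norm (z0 - x (Suc n)))\<^sup>2 \<le> R" using al by (simp add: R_def field_simps)
    then have "norm (z0 - x (Suc n)) \<le> max 1 R"
      using le_max_sq[of "norm (z0 - x (Suc n))"] by auto
    moreover have "norm (x (Suc n)) \<le> norm z0 + norm (z0 - x (Suc n))"
      by (metis norm_minus_commute norm_triangle_sub)
    ultimately show ?thesis by linarith
  qed
  define s where "s n = (\<Lambda> n, x (Suc n))" for n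
  have "bounded (range s)"
  proof (rule bounded_subset)
    show "bounded (range \<Lambda> \<times> range (\<lambda>n. x (Suc n)))"
      using bL xb by (intro bounded_Times) (auto simp: bounded_iff)
  qed (auto simp: s_def)
  then obtain l r where r: "strict_mono r" and sr: "(s \<circ> r) \<longlonglongrightarrow> l"
    using bounded_imp_convergent_subsequence by blast
  obtain L' x' where l: "l = (L', x')" by (cases l)
  have hL: "(\<lambda>k. \<Lambda> (r k)) \<longlonglongrightarrow> L'"
    using tendsto_fst[OF sr] by (simp add: s_def l o_def)
  have hx: "(\<lambda>k. x (Suc (r k))) \<longlonglongrightarrow> x'"
    using tendsto_snd[OF sr] by (simp add: s_def l o_def)
  have hP: "(\<lambda>k. P (Suc (r k))) \<longlonglongrightarrow> 0"
    using LIMSEQ_subseq_LIMSEQ[OF P0 r] by (simp add: o_def)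
  have x'M: "x' \<in> M"
  proof (rule closed_sequentially[OF closed_subspace[OF sub]])
    show "x (Suc (r k)) - P (Suc (r k)) \<in> M" for k using P by blast
    show "(\<lambda>k. x (Suc (r k)) - P (Suc (r k))) \<longlonglongrightarrow> x'"
      using tendsto_diff[OF hx hP] by simp
  qed
  have L'perp: "y \<bullet> L' = 0" if "y \<in> M" for y
  proof -
    have "(\<lambda>k. y \<bullet> \<Lambda> (r k)) \<longlonglongrightarrow> y \<bullet> L'" by (intro tendsto_intros hL)
    moreover have "y \<bullet> \<Lambda> (r k) = 0" for k using perp0[OF that Lperp] .
    ultimately show ?thesis by (simp add: LIMSEQ_const_iff)
  qed
  have bnd: "g x' \<le> ereal (b + y \<bullet> L' + \<alpha> / 2 * (norm y)\<^sup>2 - x' \<bullet> L' - \<alpha> / 2 * (norm x')\<^sup>2)"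
    if gy: "g y = ereal b" for y b
  proof (rule lsc[OF hx])
    show "(\<lambda>k. b + y \<bullet> \<Lambda> (r k) + \<alpha> / 2 * (norm y)\<^sup>2 - x (Suc (r k)) \<bullet> \<Lambda> (r k) - \<alpha> / 2 * (norm (x (Suc (r k))))\<^sup>2)
       \<longlonglongrightarrow> b + y \<bullet> L' + \<alpha> / 2 * (norm y)\<^sup>2 - x' \<bullet> L' - \<alpha> / 2 * (norm x')\<^sup>2"
      by (intro tendsto_intros hx hL)
    fix k
    have "d (r k) \<le> b + y \<bullet> \<Lambda> (r k) + \<alpha> / 2 * (norm y)\<^sup>2"
    proof -
      have "0 \<le> \<alpha> / 2 * (norm (y - x (Suc (r k))))\<^sup>2" using al by simp
      then show ?thesis using SC[OF gy, of "r k"] by linarith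
    qed
    then show "g (x (Suc (r k))) \<le> ereal (b + y \<bullet> \<Lambda> (r k) + \<alpha> / 2 * (norm y)\<^sup>2 - x (Suc (r k)) \<bullet> \<Lambda> (r k) - \<alpha> / 2 * (norm (x (Suc (r k))))\<^sup>2)"
      unfolding gx d_def by simp
  qed
  obtain xr where xr: "g x' = ereal xr"
    using bnd[OF zr] lb[of x'] by (cases "g x'") auto
  have minimal: "g x' + ereal (x' \<bullet> L') + ereal (\<alpha> / 2 * (norm x')\<^sup>2) \<le> g y + ereal (y \<bullet> L') + ereal (\<alpha> / 2 * (norm y)\<^sup>2)" for y
  proof (cases "g y")
    case (real b)
    then show ?thesis using bnd[OF real] xr by simp
  next
    case PInf then show ?thesis using xr by simp
  next
    case MInf then show ?thesis using lb[of y] by simp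
  qed
  have SC': "xr + x' \<bullet> L' + \<alpha> / 2 * (norm x')\<^sup>2 + \<alpha> / 2 * (norm (y - x'))\<^sup>2 \<le> b + y \<bullet> L' + \<alpha> / 2 * (norm y)\<^sup>2"
    if "g y = ereal b" for y b
    using strong_conv[OF conv al minimal xr that] by blast
  define e where "e n = (norm (\<Lambda> n - L'))\<^sup>2" for n
  have key: "\<alpha>\<^sup>2 * (norm (x (Suc n) - x'))\<^sup>2 \<le> e n - e (Suc n)" for n
  proof -
    define x1 where "x1 = x (Suc n)"
    define p where "p = P (Suc n)"
    define N where "N = (norm (x1 - x'))\<^sup>2"
    have h1: "xr + x' \<bullet> L' + \<alpha> / 2 * (norm x')\<^sup>2 + \<alpha> / 2 * N \<le> gx n + x1 \<bullet> L' + \<alpha> / 2 * (norm x1)\<^sup>2"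
      using SC'[OF gx[of n]] unfolding x1_def N_def .
    have h2: "d n + \<alpha> / 2 * N \<le> xr + x' \<bullet> \<Lambda> n + \<alpha> / 2 * (norm x')\<^sup>2"
      using SC[OF xr, of n] unfolding x1_def N_def by (simp add: norm_minus_commute)
    have z1: "x' \<bullet> \<Lambda> n = 0" "x' \<bullet> L' = 0" using perp0[OF x'M Lperp] L'perp[OF x'M] by auto
    have pm: "x1 - p \<in> M" "p \<in> orthogonal_comp M" using P unfolding x1_def p_def by auto
    have "x1 \<bullet> \<Lambda> n = (x1 - p) \<bullet> \<Lambda> n + p \<bullet> \<Lambda> n" "x1 \<bullet> L' = (x1 - p) \<bullet> L' + p \<bullet> L'"
      by (simp_all add: inner_simps)
    then have z2: "x1 \<bullet> \<Lambda> n = p \<bullet> \<Lambda> n" "x1 \<bullet> L' = p \<bullet> L'"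
      using perp0[OF pm(1) Lperp] L'perp[OF pm(1)] by auto
    have ineq: "p \<bullet> (\<Lambda> n - L') \<le> - \<alpha> * N"
      using h1 h2 z1 z2 unfolding d_def x1_def[symmetric] by (simp add: inner_simps)
    have "x1 - x' = (x1 - p - x') + p" by simp
    moreover have "x1 - p - x' \<in> M" using pm x'M sub by (simp add: subspace_diff)
    ultimately have pN: "(norm p)\<^sup>2 \<le> N" unfolding N_def using pyth[OF _ pm(2)] by metis
    have eS: "e (Suc n) = e n + 2 * \<alpha> * (p \<bullet> (\<Lambda> n - L')) + \<alpha>\<^sup>2 * (norm p)\<^sup>2"
    proof -
      have "\<Lambda> (Suc n) - L' = (\<Lambda> n - L') + \<alpha> *\<^sub>R p" unfolding upd p_def P_def by simp
      then show ?thesis unfolding e_def by (metis norm_add_scale_sq)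
    qed
    have "2 * \<alpha> * (p \<bullet> (\<Lambda> n - L')) \<le> 2 * \<alpha> * (- \<alpha> * N)"
      using ineq al by (intro mult_left_mono) auto
    moreover have "\<alpha>\<^sup>2 * (norm p)\<^sup>2 \<le> \<alpha>\<^sup>2 * N" using pN by (intro mult_left_mono) auto
    ultimately show ?thesis using eS unfolding N_def x1_def by (simp add: power2_eq_square algebra_simps)
  qed
  have dec: "decseq e"
  proof (rule decseq_SucI)
    fix n
    have "0 \<le> \<alpha>\<^sup>2 * (norm (x (Suc n) - x'))\<^sup>2" by simp
    then show "e (Suc n) \<le> e n" using key[of n] by linarith
  qed
  have "\<forall>i. 0 \<le> e i" by (auto simp: e_def)
  then obtain E where E: "e \<longlonglongrightarrow> E" using decseq_convergent[OF dec] by blast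
  have "(\<lambda>k. e (r k)) \<longlonglongrightarrow> (norm (L' - L'))\<^sup>2" unfolding e_def by (intro tendsto_intros hL)
  moreover have "(\<lambda>k. e (r k)) \<longlonglongrightarrow> E" using LIMSEQ_subseq_LIMSEQ[OF E r] by (simp add: o_def)
  ultimately have E0: "E = 0" using LIMSEQ_unique by fastforce
  have conL: "\<Lambda> \<longlonglongrightarrow> L'"
    using sq_to_zero[of "\<lambda>n. \<Lambda> n - L'"] E E0 LIM_zero_iff unfolding e_def by blast
  have conx: "(\<lambda>n. x (Suc n)) \<longlonglongrightarrow> x'"
  proof -
    have ee: "(\<lambda>n. (e n - e (Suc n)) / \<alpha>\<^sup>2) \<longlonglongrightarrow> (E - E) / \<alpha>\<^sup>2"
      by (intro tendsto_intros E LIMSEQ_Suc) (use al in auto)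
    have "(\<lambda>n. (norm (x (Suc n) - x'))\<^sup>2) \<longlonglongrightarrow> 0"
    proof (rule tendsto_sandwich[of "\<lambda>_. 0" _ _ "\<lambda>n. (e n - e (Suc n)) / \<alpha>\<^sup>2"])
      show "\<forall>\<^sub>F n in sequentially. (norm (x (Suc n) - x'))\<^sup>2 \<le> (e n - e (Suc n)) / \<alpha>\<^sup>2"
        using key al by (auto simp: field_simps)
    qed (use ee in auto)
    then show ?thesis using sq_to_zero[of "\<lambda>n. x (Suc n) - x'"] LIM_zero_iff by blast
  qed
  have "g x' + ereal (\<alpha> / 2 * (norm x')\<^sup>2) \<le> g y + ereal (\<alpha> / 2 * (norm y)\<^sup>2)" if "y \<in> M" for y
  proof (cases "g y")
    case (real b)
    have "xr + x' \<bullet> L' + \<alpha> / 2 * (norm x')\<^sup>2 + \<alpha> / 2 * (norm (y - x'))\<^sup>2 \<le> b + y \<bullet> L' + \<alpha> / 2 * (norm y)\<^sup>2"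
      using SC'[OF real] .
    moreover have "0 \<le> \<alpha> / 2 * (norm (y - x'))\<^sup>2" using al by simp
    ultimately show ?thesis using real xr L'perp[OF that] L'perp[OF x'M] by simp
  next
    case PInf then show ?thesis using xr by simp
  next
    case MInf then show ?thesis using lb[of y] by simp
  qed
  then show ?thesis using conx conL x'M by blast
qed

end

context das begin

lemma d_inc: "d m \<le> d n" if "m \<le> n"
proof -
  have "incseq d"
  proof (rule incseq_SucI)
    fix n
    have "0 \<le> \<alpha> / 2 * (norm (P (Suc n)))\<^sup>2" using al by simp
    then show "d n \<le> d (Suc n)" using d_mono[of n] by linarith
  qed
  then show ?thesis using that by (simp add: incseq_def)
qed

lemma finite_case:
  assumes allfin: "\<And>w. g w \<noteq> \<infinity>"
  shows "bounded (range \<Lambda>)"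
proof -
  define gr where "gr w = real_of_ereal (g w)" for w
  have ggr: "g w = ereal (gr w)" for w
    using allfin[of w] lb[of w] unfolding gr_def by (cases "g w") auto
  have "convex_on UNIV gr"
  proof (rule convex_onI)
    fix t :: real and u v :: 'a assume t: "0 < t" "t < 1"
    show "gr ((1 - t) *\<^sub>R u + t *\<^sub>R v) \<le> (1 - t) * gr u + t * gr v"
      using conv[OF ggr ggr, of t] t ggr by simp
  qed simp
  then have "continuous_on UNIV gr" by (rule convex_on_continuous[OF open_UNIV])
  then have "continuous_on (cball 0 1) gr" by (rule continuous_on_subset) simp
  then obtain u0 where u0: "\<forall>y\<in>cball 0 1. gr y \<le> gr u0"
    using continuous_attains_sup[of "cball (0::'a) 1" gr] by auto
  define B where "B = max 0 (gr u0 + \<alpha> / 2 - d 0)"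
  have "norm (\<Lambda> n) \<le> B" for n
  proof (cases "\<Lambda> n = 0")
    case True then show ?thesis by (simp add: B_def)
  next
    case False
    define u where "u = - (1 / norm (\<Lambda> n)) *\<^sub>R \<Lambda> n"
    have nu: "norm u = 1" using False by (simp add: u_def)
    have uL: "u \<bullet> \<Lambda> n = - norm (\<Lambda> n)"
      using False by (simp add: u_def power2_norm_eq_inner[symmetric] power2_eq_square)
    have "d n + \<alpha> / 2 * (norm (u - x (Suc n)))\<^sup>2 \<le> gr u + u \<bullet> \<Lambda> n + \<alpha> / 2 * (norm u)\<^sup>2"
      by (rule SC[OF ggr])
    moreover have "0 \<le> \<alpha> / 2 * (norm (u - x (Suc n)))\<^sup>2" using al by simp
    moreover have "gr u \<le> gr u0" using u0 nu by auto
    moreover have "d 0 \<le> d n" by (rule d_inc) simp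
    ultimately show ?thesis using uL nu unfolding B_def by simp
  qed
  then show ?thesis unfolding bounded_iff by blast
qed

end

theorem theorem5:
  fixes N :: "'a::euclidean_space \<Rightarrow> ereal"
    and M :: "'a set"
    and \<alpha> :: real
    and x \<Lambda> :: "nat \<Rightarrow> 'a"
  assumes "\<alpha> > 0"
    and "feasible N"
    and "subspace M"
    and "\<Lambda> 0 = 0"
    and "\<And>n y. fconj (fconj N) (x (Suc n)) + ereal (x (Suc n) \<bullet> \<Lambda> n)
                  + ereal (\<alpha> / 2 * (norm (x (Suc n)))\<^sup>2)
               \<le> fconj (fconj N) y + ereal (y \<bullet> \<Lambda> n) + ereal (\<alpha> / 2 * (norm y)\<^sup>2)"
    and "\<And>n. \<Lambda> (Suc n) = \<Lambda> n + \<alpha> *\<^sub>R proj_perp M (x (Suc n))"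
    and "(\<forall>z. N z \<noteq> \<infinity>) \<or> bounded (range (\<lambda>n. \<Lambda> (Suc n)))"
  shows "\<exists>xs Ls. (\<lambda>n. x (Suc n)) \<longlonglongrightarrow> xs \<and> \<Lambda> \<longlonglongrightarrow> Ls \<and> xs \<in> M \<and>
           (\<forall>y\<in>M. fconj (fconj N) xs + ereal (\<alpha> / 2 * (norm xs)\<^sup>2)
                     \<le> fconj (fconj N) y + ereal (\<alpha> / 2 * (norm y)\<^sup>2))"
proof -
  obtain c where c: "\<And>w. ereal c \<le> N w" using assms(2) unfolding feasible_def by auto
  obtain z0 where z0: "N z0 \<noteq> \<infinity>" using assms(2) unfolding feasible_def by auto
  have fz: "fconj (fconj N) z0 \<noteq> \<infinity>" using G_ub[of N z0] z0 by auto
  interpret das "fconj (fconj N)" c M \<alpha> x \<Lambda> z0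
  proof (unfold_locales)
    show "\<And>w. ereal c \<le> fconj (fconj N) w" using G_lb c by blast
    show "\<And>x y a b t. fconj (fconj N) x = ereal a \<Longrightarrow> fconj (fconj N) y = ereal b \<Longrightarrow> 0 \<le> t \<Longrightarrow> t \<le> 1 \<Longrightarrow>
          fconj (fconj N) ((1 - t) *\<^sub>R x + t *\<^sub>R y) \<le> ereal ((1 - t) * a + t * b)"
      by (rule G_conv)
    show "\<And>w w0 b b0. w \<longlonglongrightarrow> w0 \<Longrightarrow> b \<longlonglongrightarrow> b0 \<Longrightarrow> (\<And>k. fconj (fconj N) (w k) \<le> ereal (b k)) \<Longrightarrow>
          fconj (fconj N) w0 \<le> ereal b0"
      by (rule G_lsc)
  qed (use assms fz in auto)
  have "bounded (range \<Lambda>)"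
    using assms(7)
  proof
    assume "\<forall>z. N z \<noteq> \<infinity>"
    then have "\<And>w. fconj (fconj N) w \<noteq> \<infinity>"
    proof -
      fix w assume h: "\<forall>z. N z \<noteq> \<infinity>"
      have "fconj (fconj N) w \<le> N w" by (rule G_ub)
      then show "fconj (fconj N) w \<noteq> \<infinity>" using h by auto
    qed
    then show ?thesis by (rule finite_case)
  next
    assume b: "bounded (range (\<lambda>n. \<Lambda> (Suc n)))"
    have "range \<Lambda> = insert (\<Lambda> 0) (range (\<lambda>n. \<Lambda> (Suc n)))"
      by (auto simp: image_def) (metis not0_implies_Suc)
    then show ?thesis using b by simp
  qed
  then show ?thesis by (rule bounded_case)
qed

end
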